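(* Let $C\subset\mathbb{D}$ be a subspace of dimension $n\ge 1$ with basis $c_1,\dots,c_n$. Then there exists a constant coefficient differential operator $L_0\in\mathbb{C}[\partial]$ which factors as $$L_0=\bar Q\circ\frac{1}{\pi(x)}\circ \bar K_C,$$ where $\bar Q$ and $\bar K_C=\tau_C(x)K_C$ are differential operators in $x$ with polynomial-exponential coefficients and $\pi(x)$ is a polynomial-exponential function.
   Context: $\mathbb{D}$ is the complex vector space spanned by the distributions $\Delta(\lambda,m)$ ($\lambda\in\mathbb{C}$, $m\in\mathbb{N}$) acting on functions of $z$ by $\Delta(\lambda,m)[f(z)]=f^{(m)}(\lambda)$; for a function $f(x,z)$, $c[f(x,z)]$ denotes the resulting function of $x$. Write $\partial=\partial/\partial x$. A polynomial-exponential function is a function of the form $\sum_{i=1}^k p_i(x)e^{\mu_i x}$ with $\mu_i\in\mathbb{C}$, $p_i\in\mathbb{C}[x]$. $\tau_C(x)=\mathrm{Wr}(c_1(e^{xz}),\dots,c_n(e^{xz}))$ is the Wronskian in $x$ of the functions $c_i(e^{xz})$, and $K_C$ is the unique monic ordinary differential operator in $x$ of order $n$ whose kernel contains the functions $c_i(e^{xz})$, i.e. $K_C(f)=\frac{1}{\tau_C(x)}\mathrm{Wr}(c_1(e^{xz}),\dots,c_n(e^{xz}),f(x))$. *)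

theory Defs
  imports "HOL-Complex_Analysis.Complex_Analysis" "HOL-Computational_Algebra.Polynomial"
    "Jordan_Normal_Form.Determinant"
begin

text \<open>An element of the space D: a finitely supported family of coefficients,
  c = sum of c(lambda,m) * Delta(lambda,m).\<close>
definition is_dist :: "(complex \<times> nat \<Rightarrow> complex) \<Rightarrow> bool" where
  "is_dist c \<longleftrightarrow> finite {p. c p \<noteq> 0}"

text \<open>Action on a function F of z:  Delta(lambda,m)[F] = F^(m)(lambda).\<close>
definition apply_dist :: "(complex \<times> nat \<Rightarrow> complex) \<Rightarrow> (complex \<Rightarrow> complex) \<Rightarrow> complex" where
  "apply_dist c F = (\<Sum>p\<in>{p. c p \<noteq> 0}. c p * (deriv ^^ snd p) F (fst p))"

definition dist_exp :: "(complex \<times> nat \<Rightarrow> complex) \<Rightarrow> complex \<Rightarrow> complex" where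
  "dist_exp c = (\<lambda>x. apply_dist c (\<lambda>z. exp (x * z)))"

definition polyexp :: "(complex \<Rightarrow> complex) \<Rightarrow> bool" where
  "polyexp f \<longleftrightarrow> (\<exists>ps :: (complex \<times> complex poly) list.
      \<forall>x. f x = (\<Sum>(mu, p)\<leftarrow>ps. poly p x * exp (mu * x)))"

definition wronskian :: "nat \<Rightarrow> (nat \<Rightarrow> complex \<Rightarrow> complex) \<Rightarrow> complex \<Rightarrow> complex" where
  "wronskian k fs x = det (mat k k (\<lambda>(i, j). (deriv ^^ i) (fs j) x))"

definition apply_op :: "(complex \<Rightarrow> complex) list \<Rightarrow> (complex \<Rightarrow> complex) \<Rightarrow> complex \<Rightarrow> complex" where
  "apply_op as f x = (\<Sum>i<length as. (as ! i) x * (deriv ^^ i) f x)"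

definition apply_const_op :: "complex list \<Rightarrow> (complex \<Rightarrow> complex) \<Rightarrow> complex \<Rightarrow> complex" where
  "apply_const_op l f x = (\<Sum>i<length l. (l ! i) * (deriv ^^ i) f x)"

text \<open>Kbar_C = tau_C K_C :  f |-> Wr(c_1(e^{xz}),...,c_n(e^{xz}), f).\<close>
definition Kbar :: "nat \<Rightarrow> (nat \<Rightarrow> complex \<times> nat \<Rightarrow> complex) \<Rightarrow> (complex \<Rightarrow> complex) \<Rightarrow> complex \<Rightarrow> complex" where
  "Kbar n c f = wronskian (Suc n) (\<lambda>j. if j < n then dist_exp (c j) else f)"

end

theory Submission
  imports Defs
begin



lemma pe_term_deriv:
  fixes mu :: complex
  shows "((\<lambda>x. poly p x * exp (mu * x)) has_field_derivative poly (pderiv p + Polynomial.smult mu p) x * exp (mu * x)) (at x)"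
proof -
  have e: "((\<lambda>x::complex. exp (mu * x)) has_field_derivative exp (mu * x) * mu) (at x)"
    by (auto intro!: derivative_eq_intros)
  have "((\<lambda>x. poly p x * exp (mu * x)) has_field_derivative
      poly p x * (exp (mu * x) * mu) + poly (pderiv p) x * exp (mu * x)) (at x)"
    by (rule DERIV_mult'[OF poly_DERIV e])
  then show ?thesis by (simp add: algebra_simps)
qed

definition pel :: "(complex \<times> complex poly) list \<Rightarrow> complex \<Rightarrow> complex" where
  "pel ps = (\<lambda>x. \<Sum>(mu, p)\<leftarrow>ps. poly p x * exp (mu * x))"

definition pelD :: "(complex \<times> complex poly) list \<Rightarrow> (complex \<times> complex poly) list" where
  "pelD ps = map (\<lambda>(mu, p). (mu, pderiv p + Polynomial.smult mu p)) ps"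

lemma pel_deriv: "(pel ps has_field_derivative pel (pelD ps) x) (at x)"
proof (induction ps)
  case Nil then show ?case by (simp add: pel_def pelD_def)
next
  case (Cons a ps)
  obtain mu p where a: "a = (mu, p)" by fastforce
  have "((\<lambda>x. poly p x * exp (mu * x) + pel ps x) has_field_derivative
     poly (pderiv p + Polynomial.smult mu p) x * exp (mu * x) + pel (pelD ps) x) (at x)"
    by (intro DERIV_add pe_term_deriv Cons.IH)
  then show ?case using a by (simp add: pel_def pelD_def)
qed

lemma polyexp_pel: "polyexp f \<longleftrightarrow> (\<exists>ps. f = pel ps)"
  unfolding polyexp_def pel_def by (auto simp: fun_eq_iff)

lemma polyexp_pelI: "polyexp (pel ps)"
  using polyexp_pel by blast

lemma polyexp_holo: "polyexp f \<Longrightarrow> f holomorphic_on S"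
  unfolding polyexp_pel holomorphic_on_def
  using pel_deriv field_differentiable_at_within field_differentiable_def by blast

lemma polyexp_deriv_eq: "deriv (pel ps) = pel (pelD ps)"
  using pel_deriv DERIV_imp_deriv by blast

lemma polyexp_deriv: "polyexp f \<Longrightarrow> polyexp (deriv f)"
  unfolding polyexp_pel using polyexp_deriv_eq by metis

lemma polyexp_higher_deriv: "polyexp f \<Longrightarrow> polyexp ((deriv ^^ i) f)"
  by (induction i) (auto intro: polyexp_deriv)

lemma polyexp_const: "polyexp (\<lambda>x. a)"
  unfolding polyexp_def by (rule exI[of _ "[(0, [:a:])]"]) simp

lemma polyexp_term: "polyexp (\<lambda>x. poly p x * exp (mu * x))"
  unfolding polyexp_def by (rule exI[of _ "[(mu, p)]"]) simp

lemma polyexp_add: "polyexp f \<Longrightarrow> polyexp g \<Longrightarrow> polyexp (\<lambda>x. f x + g x)"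
  unfolding polyexp_pel
proof (elim exE)
  fix ps qs assume "f = pel ps" "g = pel qs"
  then show "\<exists>rs. (\<lambda>x. f x + g x) = pel rs"
    by (intro exI[of _ "ps @ qs"]) (simp add: pel_def)
qed

lemma polyexp_term_mult: "polyexp g \<Longrightarrow> polyexp (\<lambda>x. poly p x * exp (mu * x) * g x)"
  unfolding polyexp_pel
proof (elim exE)
  fix qs assume g: "g = pel qs"
  have "(\<lambda>x. poly p x * exp (mu * x) * g x) = pel (map (\<lambda>(nu, q). (mu + nu, p * q)) qs)"
    unfolding g pel_def fun_eq_iff
    by (induction qs) (auto simp: algebra_simps exp_add)
  then show "\<exists>rs. (\<lambda>x. poly p x * exp (mu * x) * g x) = pel rs" by blast
qed

lemma polyexp_mult: "polyexp f \<Longrightarrow> polyexp g \<Longrightarrow> polyexp (\<lambda>x. f x * g x)"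
proof -
  assume f: "polyexp f" and g: "polyexp g"
  from f obtain ps where "f = pel ps" unfolding polyexp_pel by blast
  moreover have "polyexp (\<lambda>x. pel ps x * g x)"
  proof (induction ps)
    case Nil then show ?case by (simp add: pel_def polyexp_const)
  next
    case (Cons a ps)
    obtain mu p where a: "a = (mu, p)" by fastforce
    have "polyexp (\<lambda>x. poly p x * exp (mu * x) * g x + pel ps x * g x)"
      by (intro polyexp_add polyexp_term_mult g Cons.IH)
    then show ?case using a by (simp add: pel_def algebra_simps)
  qed
  ultimately show ?thesis by simp
qed

lemma polyexp_cmult: "polyexp f \<Longrightarrow> polyexp (\<lambda>x. a * f x)"
  using polyexp_mult[OF polyexp_const] .

lemma polyexp_uminus: "polyexp f \<Longrightarrow> polyexp (\<lambda>x. - f x)"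
  using polyexp_cmult[of f "-1"] by simp

lemma polyexp_diff: "polyexp f \<Longrightarrow> polyexp g \<Longrightarrow> polyexp (\<lambda>x. f x - g x)"
  using polyexp_add[OF _ polyexp_uminus] by simp

lemma polyexp_sum: "(\<And>i. i \<in> A \<Longrightarrow> polyexp (f i)) \<Longrightarrow> polyexp (\<lambda>x. \<Sum>i\<in>A. f i x)"
proof (induction A rule: infinite_finite_induct)
  case (infinite A) then show ?case by (simp add: polyexp_const)
next
  case empty then show ?case by (simp add: polyexp_const)
next
  case (insert a A) then show ?case by (simp add: polyexp_add)
qed

lemma polyexp_prod: "(\<And>i. i \<in> A \<Longrightarrow> polyexp (f i)) \<Longrightarrow> polyexp (\<lambda>x. \<Prod>i\<in>A. f i x)"
proof (induction A rule: infinite_finite_induct)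
  case (infinite A) then show ?case by (simp add: polyexp_const)
next
  case empty then show ?case by (simp add: polyexp_const)
next
  case (insert a A) then show ?case by (simp add: polyexp_mult)
qed

lemma polyexp_power: "polyexp f \<Longrightarrow> polyexp (\<lambda>x. f x ^ k)"
  by (induction k) (auto simp: polyexp_const polyexp_mult)

lemma holo_det:
  assumes "\<And>i j. i < n \<Longrightarrow> j < n \<Longrightarrow> (E i j) holomorphic_on S"
  shows "(\<lambda>x. det (mat n n (\<lambda>(i,j). E i j x))) holomorphic_on S"
proof -
  have "(\<lambda>x. det (mat n n (\<lambda>(i,j). E i j x))) = (\<lambda>x. \<Sum> p \<in> {p. p permutes {0 ..< n}}.
     signof p * (\<Prod> i = 0 ..< n. E i (p i) x))"
    by (rule ext, subst det_def'[of _ n]) (auto intro!: sum.cong prod.cong)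
  moreover have "(\<lambda>x. \<Sum> p \<in> {p. p permutes {0 ..< n}}.
     signof p * (\<Prod> i = 0 ..< n. E i (p i) x)) holomorphic_on S"
    using assms by (intro holomorphic_intros) (auto simp: permutes_def)
  ultimately show ?thesis by simp
qed

lemma polyexp_det:
  assumes "\<And>i j. i < n \<Longrightarrow> j < n \<Longrightarrow> polyexp (E i j)"
  shows "polyexp (\<lambda>x. det (mat n n (\<lambda>(i,j). E i j x)))"
proof -
  have "(\<lambda>x. det (mat n n (\<lambda>(i,j). E i j x))) = (\<lambda>x. \<Sum> p \<in> {p. p permutes {0 ..< n}}.
     signof p * (\<Prod> i = 0 ..< n. E i (p i) x))"
    by (rule ext, subst det_def'[of _ n]) (auto intro!: sum.cong prod.cong)
  moreover have "polyexp (\<lambda>x. \<Sum> p \<in> {p. p permutes {0 ..< n}}.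
     signof p * (\<Prod> i = 0 ..< n. E i (p i) x))"
    using assms by (intro polyexp_sum polyexp_cmult polyexp_prod) (auto simp: permutes_def)
  ultimately show ?thesis by simp
qed




definition peS :: "complex set \<Rightarrow> (complex \<Rightarrow> complex poly) \<Rightarrow> complex \<Rightarrow> complex" where
  "peS L q = (\<lambda>x. \<Sum>l\<in>L. poly (q l) x * exp (l * x))"

definition Phi :: "complex \<Rightarrow> complex \<Rightarrow> complex poly \<Rightarrow> complex poly" where
  "Phi mu l r = pderiv r + Polynomial.smult (l - mu) r"

definition Dop :: "complex \<Rightarrow> (complex \<Rightarrow> complex) \<Rightarrow> complex \<Rightarrow> complex" where
  "Dop mu f = (\<lambda>x. deriv f x - mu * f x)"

lemma peS_deriv:
  "(peS L q has_field_derivative peS L (\<lambda>l. pderiv (q l) + Polynomial.smult l (q l)) x) (at x)"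
  unfolding peS_def by (intro DERIV_sum pe_term_deriv)

lemma Dop_peS: "Dop mu (peS L q) = peS L (\<lambda>l. Phi mu l (q l))"
proof
  fix x
  have "deriv (peS L q) x = peS L (\<lambda>l. pderiv (q l) + Polynomial.smult l (q l)) x"
    using peS_deriv DERIV_imp_deriv by blast
  then show "Dop mu (peS L q) x = peS L (\<lambda>l. Phi mu l (q l)) x"
    unfolding Dop_def peS_def Phi_def
    by (simp add: sum_distrib_left sum_subtractf[symmetric] algebra_simps)
qed

lemma foldr_Dop_peS:
  "foldr Dop mus (peS L q) = peS L (\<lambda>l. foldr (\<lambda>mu. Phi mu l) mus (q l))"
  by (induction mus) (auto simp: Dop_peS)

lemma Dop_zero: "Dop mu (\<lambda>x. 0) = (\<lambda>x. 0)"
  unfolding Dop_def by simp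

lemma foldr_Dop_zero: "foldr Dop mus (\<lambda>x. 0) = (\<lambda>x. 0)"
  by (induction mus) (auto simp: Dop_zero)

lemma Phi_zero[simp]: "Phi mu l 0 = 0"
  unfolding Phi_def by simp

lemma Phi_degree: "degree (Phi mu l r) \<le> degree r"
  unfolding Phi_def
  by (metis degree_add_le degree_pderiv degree_smult_le diff_le_self)

lemma Phi_inj: assumes "mu \<noteq> l" "Phi mu l r = 0" shows "r = 0"
proof (rule ccontr)
  assume r: "r \<noteq> 0"
  have "coeff (Phi mu l r) (degree r) = (l - mu) * coeff r (degree r)"
    unfolding Phi_def by (simp add: coeff_pderiv coeff_eq_0)
  moreover have "coeff r (degree r) \<noteq> 0" using r by simp
  ultimately show False using assms by simp
qed

lemma foldr_Phi_inj: "l \<notin> set mus \<Longrightarrow> foldr (\<lambda>mu. Phi mu l) mus r = 0 \<Longrightarrow> r = 0"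
proof (induction mus)
  case (Cons a mus)
  then have "a \<noteq> l" by auto
  moreover have "Phi a l (foldr (\<lambda>mu. Phi mu l) mus r) = 0" using Cons.prems by simp
  ultimately have "foldr (\<lambda>mu. Phi mu l) mus r = 0" by (rule Phi_inj)
  then show ?case using Cons by simp
qed simp

lemma count_replicate: "count_list (replicate k a) a = k"
  by (induction k) auto

lemma foldr_Phi_kill_aux:
  "foldr (\<lambda>mu. Phi mu l) mus r = 0 \<or> degree (foldr (\<lambda>mu. Phi mu l) mus r) + count_list mus l \<le> degree r"
proof (induction mus)
  case Nil then show ?case by simp
next
  case (Cons mu mus)
  define s where "s = foldr (\<lambda>mu. Phi mu l) mus r"
  show ?case
  proof (cases "s = 0")
    case True then show ?thesis by (simp add: s_def[symmetric])
  next
    case False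
    with Cons.IH have IH: "degree s + count_list mus l \<le> degree r" by (simp add: s_def)
    show ?thesis
    proof (cases "mu = l")
      case True
      have "Phi mu l s = pderiv s" using True by (simp add: Phi_def)
      then show ?thesis using IH True
        by (cases "degree s = 0") (auto simp: s_def[symmetric] pderiv_eq_0_iff degree_pderiv)
    next
      case False
      then show ?thesis using IH Phi_degree[of mu l s] by (auto simp: s_def[symmetric])
    qed
  qed
qed

lemma foldr_Phi_kill: "degree r < count_list mus l \<Longrightarrow> foldr (\<lambda>mu. Phi mu l) mus r = 0"
  using foldr_Phi_kill_aux[of l mus r] by auto

lemma peS_indep:
  assumes "finite L"
  shows "\<forall>q. (\<forall>x. peS L q x = 0) \<longrightarrow> (\<forall>l\<in>L. q l = 0)"
  using assms
proof (induction L rule: finite_induct)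
  case empty then show ?case by simp
next
  case (insert l0 L)
  show ?case
  proof (intro allI impI)
    fix q assume z: "\<forall>x. peS (insert l0 L) q x = 0"
    define mus where "mus = replicate (Suc (degree (q l0))) l0"
    have cnt: "count_list mus l0 = Suc (degree (q l0))"
      unfolding mus_def by (rule count_replicate)
    have "peS (insert l0 L) q = (\<lambda>x. 0)" using z by auto
    then have "foldr Dop mus (peS (insert l0 L) q) = (\<lambda>x. 0)" by (simp add: foldr_Dop_zero)
    then have A: "peS (insert l0 L) (\<lambda>l. foldr (\<lambda>mu. Phi mu l) mus (q l)) = (\<lambda>x. 0)"
      by (simp add: foldr_Dop_peS)
    have k0: "foldr (\<lambda>mu. Phi mu l0) mus (q l0) = 0"
      by (rule foldr_Phi_kill) (simp add: cnt)
    have "\<forall>x. peS L (\<lambda>l. foldr (\<lambda>mu. Phi mu l) mus (q l)) x = 0"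
    proof
      fix x
      have "peS (insert l0 L) (\<lambda>l. foldr (\<lambda>mu. Phi mu l) mus (q l)) x = 0" using A by metis
      then show "peS L (\<lambda>l. foldr (\<lambda>mu. Phi mu l) mus (q l)) x = 0"
        using insert.hyps k0 by (simp add: peS_def)
    qed
    with insert.IH have B: "\<forall>l\<in>L. foldr (\<lambda>mu. Phi mu l) mus (q l) = 0" by blast
    have qL: "\<forall>l\<in>L. q l = 0"
    proof
      fix l assume "l \<in> L"
      then have "l \<noteq> l0" using insert.hyps by auto
      then have "l \<notin> set mus" by (simp add: mus_def)
      then show "q l = 0" using B \<open>l \<in> L\<close> foldr_Phi_inj by blast
    qed
    have "\<forall>x. poly (q l0) x = 0"
    proof
      fix x
      have "peS (insert l0 L) q x = 0" using z by blast
      then have "poly (q l0) x * exp (l0 * x) = 0"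
        using insert.hyps qL by (simp add: peS_def)
      then show "poly (q l0) x = 0" by simp
    qed
    then have "q l0 = 0" using poly_all_0_iff_0 by blast
    with qL show "\<forall>l\<in>insert l0 L. q l = 0" by simp
  qed
qed

lemma higher_deriv_exp_lin:
  "(deriv ^^ m) (\<lambda>z. exp (x * z)) = (\<lambda>z. x ^ m * exp (x * z))"
proof (induction m)
  case 0 then show ?case by simp
next
  case (Suc m)
  have "deriv (\<lambda>z. x ^ m * exp (x * z)) = (\<lambda>z. x ^ Suc m * exp (x * z))"
  proof
    fix z
    have "((\<lambda>z. x ^ m * exp (x * z)) has_field_derivative x ^ Suc m * exp (x * z)) (at z)"
      by (auto intro!: derivative_eq_intros simp: algebra_simps)
    then show "deriv (\<lambda>z. x ^ m * exp (x * z)) z = x ^ Suc m * exp (x * z)"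
      by (rule DERIV_imp_deriv)
  qed
  then show ?case using Suc by simp
qed

lemma dist_exp_eq:
  assumes "finite S" "{p. c p \<noteq> 0} \<subseteq> S"
  shows "dist_exp c x = (\<Sum>p\<in>S. c p * x ^ snd p * exp (fst p * x))"
proof -
  have "dist_exp c x = (\<Sum>p\<in>{p. c p \<noteq> 0}. c p * x ^ snd p * exp (fst p * x))"
    unfolding dist_exp_def apply_dist_def higher_deriv_exp_lin
    by (auto simp: algebra_simps intro!: sum.cong)
  also have "\<dots> = (\<Sum>p\<in>S. c p * x ^ snd p * exp (fst p * x))"
    by (rule sum.mono_neutral_left) (use assms in auto)
  finally show ?thesis .
qed

definition qof :: "(complex \<times> nat) set \<Rightarrow> (complex \<times> nat \<Rightarrow> complex) \<Rightarrow> complex \<Rightarrow> complex poly" where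
  "qof S d l = (\<Sum>p\<in>{p\<in>S. fst p = l}. monom (d p) (snd p))"

lemma regroup:
  assumes "finite S"
  shows "(\<Sum>p\<in>S. d p * x ^ snd p * exp (fst p * x)) = peS (fst ` S) (qof S d) x"
proof -
  have "(\<Sum>p\<in>S. d p * x ^ snd p * exp (fst p * x)) =
     (\<Sum>l\<in>fst ` S. \<Sum>p\<in>{p\<in>S. fst p = l}. d p * x ^ snd p * exp (fst p * x))"
    by (rule sum.image_gen[OF assms])
  also have "\<dots> = peS (fst ` S) (qof S d) x"
    unfolding peS_def qof_def poly_sum
    by (intro sum.cong refl) (auto simp: sum_distrib_right poly_monom intro!: sum.cong)
  finally show ?thesis .
qed

lemma coeff_qof:
  assumes "finite S" "(l, m) \<in> S"
  shows "coeff (qof S d l) m = d (l, m)"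
proof -
  have "coeff (qof S d l) m = (\<Sum>p\<in>{p\<in>S. fst p = l}. if snd p = m then d p else 0)"
    unfolding qof_def coeff_sum coeff_monom by (intro sum.cong) auto
  also have "\<dots> = (\<Sum>p\<in>{p\<in>S. fst p = l}. if p = (l, m) then d p else 0)"
    by (intro sum.cong) (auto simp: prod_eq_iff)
  also have "\<dots> = d (l, m)" using assms by (subst sum.delta) auto
  finally show ?thesis .
qed

lemma degree_qof: assumes "finite S" "\<And>p. p \<in> S \<Longrightarrow> snd p \<le> R" shows "degree (qof S d l) \<le> R"
  unfolding qof_def
  by (rule degree_sum_le) (use assms in \<open>auto intro: order.trans[OF degree_monom_le]\<close>)

lemma expoly_indep:
  fixes S :: "(complex \<times> nat) set"
  assumes "finite S" "\<forall>x. (\<Sum>p\<in>S. d p * x ^ snd p * exp (fst p * x)) = 0"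
  shows "\<forall>p\<in>S. d p = 0"
proof
  fix p assume p: "p \<in> S"
  have "\<forall>x. peS (fst ` S) (qof S d) x = 0" using assms regroup by metis
  then have "\<forall>l\<in>fst ` S. qof S d l = 0" using peS_indep[of "fst ` S"] assms(1) by blast
  then have "qof S d (fst p) = 0" using p by auto
  then have "coeff (qof S d (fst p)) (snd p) = 0" by simp
  then show "d p = 0" using coeff_qof[OF assms(1), of "fst p" "snd p" d] p by simp
qed




lemma higher_deriv_sum:
  assumes "finite A" "\<And>i. i \<in> A \<Longrightarrow> f i holomorphic_on UNIV"
  shows "(deriv ^^ k) (\<lambda>x. \<Sum>i\<in>A. f i x) x = (\<Sum>i\<in>A. (deriv ^^ k) (f i) x)"
  using assms
proof (induction A rule: finite_induct)
  case empty then show ?case by (simp add: higher_deriv_const)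
next
  case (insert a A)
  have "(deriv ^^ k) (\<lambda>x. f a x + (\<Sum>i\<in>A. f i x)) x = (deriv ^^ k) (f a) x + (deriv ^^ k) (\<lambda>x. \<Sum>i\<in>A. f i x) x"
    by (rule higher_deriv_add[of _ UNIV]) (use insert in \<open>auto intro!: holomorphic_intros\<close>)
  then show ?case using insert by simp
qed

definition opcK :: "nat \<Rightarrow> complex poly \<Rightarrow> (complex \<Rightarrow> complex) \<Rightarrow> complex \<Rightarrow> complex" where
  "opcK K P f = (\<lambda>x. \<Sum>i<K. coeff P i * (deriv ^^ i) f x)"

lemma coeff_lin: fixes P :: "complex poly" shows "coeff ([:-mu, 1:] * P) i = (case i of 0 \<Rightarrow> 0 | Suc j \<Rightarrow> coeff P j) - mu * coeff P i"
  by (cases i) (simp_all add: mult_pCons_left coeff_pCons algebra_simps)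

lemma opcK_mult:
  assumes f: "f holomorphic_on UNIV" and K: "degree P < K"
  shows "opcK (Suc K) ([:-mu, 1:] * P) f = Dop mu (opcK K P f)"
proof
  fix x
  have d: "(opcK K P f has_field_derivative (\<Sum>i<K. coeff P i * (deriv ^^ Suc i) f x)) (at x)"
    unfolding opcK_def
    by (intro DERIV_sum DERIV_cmult has_field_derivative_higher_deriv[OF f]) auto
  have cK: "coeff P K = 0" using K by (simp add: coeff_eq_0)
  have "opcK (Suc K) ([:-mu, 1:] * P) f x =
     (\<Sum>i<Suc K. (case i of 0 \<Rightarrow> 0 | Suc j \<Rightarrow> coeff P j) * (deriv ^^ i) f x)
     - mu * (\<Sum>i<Suc K. coeff P i * (deriv ^^ i) f x)"
    unfolding opcK_def coeff_lin
    by (simp add: left_diff_distrib sum_subtractf sum_distrib_left mult.assoc distrib_left)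
  also have "(\<Sum>i<Suc K. (case i of 0 \<Rightarrow> 0 | Suc j \<Rightarrow> coeff P j) * (deriv ^^ i) f x)
      = (\<Sum>i<K. coeff P i * (deriv ^^ Suc i) f x)"
    by (subst sum.lessThan_Suc_shift) simp
  also have "(\<Sum>i<Suc K. coeff P i * (deriv ^^ i) f x) = opcK K P f x"
    unfolding opcK_def using cK by simp
  finally show "opcK (Suc K) ([:-mu, 1:] * P) f x = Dop mu (opcK K P f) x"
    unfolding Dop_def using DERIV_imp_deriv[OF d] by simp
qed

definition prodP :: "complex list \<Rightarrow> complex poly" where
  "prodP mus = foldr (\<lambda>mu P. [:-mu, 1:] * P) mus 1"

lemma prodP_nz: "prodP mus \<noteq> 0"
  unfolding prodP_def by (induction mus) (auto simp del: mult_pCons_left)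

lemma prodP_degree: "degree (prodP mus) = length mus"
proof (induction mus)
  case Nil then show ?case by (simp add: prodP_def)
next
  case (Cons mu mus)
  have "degree ([:-mu, 1:] * prodP mus) = degree [:-mu, 1:] + degree (prodP mus)"
    by (rule degree_mult_eq) (auto simp: prodP_nz)
  then show ?case using Cons by (simp add: prodP_def)
qed

lemma opcK_prodP:
  assumes f: "f holomorphic_on UNIV"
  shows "opcK (Suc (length mus)) (prodP mus) f = foldr Dop mus f"
proof (induction mus)
  case Nil
  show ?case unfolding opcK_def prodP_def by (simp add: fun_eq_iff)
next
  case (Cons mu mus)
  have "opcK (Suc (Suc (length mus))) ([:-mu, 1:] * prodP mus) f = Dop mu (opcK (Suc (length mus)) (prodP mus) f)"
    by (rule opcK_mult[OF f]) (simp add: prodP_degree)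
  then show ?case using Cons by (simp add: prodP_def)
qed

lemma apply_const_op_coeffs:
  assumes "P \<noteq> 0"
  shows "apply_const_op (coeffs P) f x = opcK (Suc (degree P)) P f x"
  unfolding apply_const_op_def opcK_def length_coeffs_degree[OF assms]
  by (intro sum.cong refl) (simp add: coeffs_nth[OF assms])

lemma count_replicate_gen: "count_list (replicate k a) l = (if a = l then k else 0)"
  by (induction k) auto

lemma count_concat: "l \<in> set xs \<Longrightarrow> k \<le> count_list (concat (map (\<lambda>l. replicate k l) xs)) l"
  by (induction xs) (auto simp: count_replicate_gen)

lemma peS_holo: "peS L q holomorphic_on A"
  unfolding holomorphic_on_def
  using peS_deriv field_differentiable_at_within field_differentiable_def by blast

lemma dist_exp_peS:
  assumes "finite S" "{p. c p \<noteq> 0} \<subseteq> S"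
  shows "dist_exp c = peS (fst ` S) (qof S c)"
  using dist_exp_eq[OF assms] regroup[OF assms(1)] by auto

lemma L0_exists:
  fixes S :: "(complex \<times> nat) set"
  assumes S: "finite S" and sup: "\<And>j. j < n \<Longrightarrow> {p. c j p \<noteq> 0} \<subseteq> S"
  shows "\<exists>P. P \<noteq> 0 \<and> n \<le> degree P \<and> (\<forall>j<n. \<forall>x. apply_const_op (coeffs P) (dist_exp (c j)) x = 0)"
proof -
  obtain xs where xs: "set xs = fst ` S" using finite_list[of "fst ` S"] S by blast
  define R where "R = (\<Sum>p\<in>S. snd p)"
  have R: "\<And>p. p \<in> S \<Longrightarrow> snd p \<le> R" unfolding R_def using S by (intro member_le_sum) auto
  define mus where "mus = concat (map (\<lambda>l. replicate (Suc R) l) xs) @ replicate n 0"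
  define P where "P = prodP mus"
  have Pnz: "P \<noteq> 0" unfolding P_def by (rule prodP_nz)
  have degP: "degree P = length mus" unfolding P_def by (rule prodP_degree)
  have "n \<le> length mus" unfolding mus_def by simp
  moreover have "\<forall>j<n. \<forall>x. apply_const_op (coeffs P) (dist_exp (c j)) x = 0"
  proof (intro allI impI)
    fix j x assume j: "j < n"
    have de: "dist_exp (c j) = peS (fst ` S) (qof S (c j))" by (rule dist_exp_peS[OF S sup[OF j]])
    have "apply_const_op (coeffs P) (dist_exp (c j)) x = opcK (Suc (length mus)) P (dist_exp (c j)) x"
      using apply_const_op_coeffs[OF Pnz] degP by simp
    also have "\<dots> = foldr Dop mus (peS (fst ` S) (qof S (c j))) x"
      unfolding de P_def
      by (subst opcK_prodP) (auto simp: peS_holo)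
    also have "\<dots> = peS (fst ` S) (\<lambda>l. foldr (\<lambda>mu. Phi mu l) mus (qof S (c j) l)) x"
      by (simp add: foldr_Dop_peS)
    also have "\<dots> = 0"
      unfolding peS_def
    proof (intro sum.neutral ballI)
      fix l assume l: "l \<in> fst ` S"
      have "degree (qof S (c j) l) \<le> R" by (rule degree_qof[OF S R])
      also have "R < count_list mus l"
        using count_concat[of l xs "Suc R"] l xs by (simp add: mus_def)
      finally have "foldr (\<lambda>mu. Phi mu l) mus (qof S (c j) l) = 0" by (rule foldr_Phi_kill)
      then show "poly (foldr (\<lambda>mu. Phi mu l) mus (qof S (c j) l)) x * exp (l * x) = 0" by simp
    qed
    finally show "apply_const_op (coeffs P) (dist_exp (c j)) x = 0" .
  qed
  ultimately show ?thesis using Pnz degP by auto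
qed




lemma adj_row:
  assumes A: "A \<in> carrier_mat n n" and i: "i < n" and j: "j < n"
  shows "(\<Sum>k<n. A $$ (i,k) * cofactor A j k) = (if i = j then det A else 0)"
proof -
  have "(A * adj_mat A) $$ (i,j) = (det A \<cdot>\<^sub>m 1\<^sub>m n) $$ (i,j)" using adj_mat(2)[OF A] by simp
  moreover have "(A * adj_mat A) $$ (i,j) = (\<Sum>k<n. A $$ (i,k) * cofactor A j k)"
    using A i j adj_mat(1)[OF A]
    by (auto simp: index_mult_mat scalar_prod_def adj_mat_def atLeast0LessThan intro!: sum.cong)
  ultimately show ?thesis using i j by simp
qed

lemma adj_col:
  assumes A: "A \<in> carrier_mat n n" and i: "i < n" and j: "j < n"
  shows "(\<Sum>k<n. cofactor A k i * A $$ (k,j)) = (if i = j then det A else 0)"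
proof -
  have "(adj_mat A * A) $$ (i,j) = (det A \<cdot>\<^sub>m 1\<^sub>m n) $$ (i,j)" using adj_mat(3)[OF A] by simp
  moreover have "(adj_mat A * A) $$ (i,j) = (\<Sum>k<n. cofactor A k i * A $$ (k,j))"
    using A i j adj_mat(1)[OF A]
    by (auto simp: index_mult_mat scalar_prod_def adj_mat_def atLeast0LessThan intro!: sum.cong)
  ultimately show ?thesis using i j by simp
qed

lemma kernel_trivial:
  fixes A :: "complex mat"
  assumes A: "A \<in> carrier_mat n n" and d: "det A \<noteq> 0"
    and v: "\<And>i. i < n \<Longrightarrow> (\<Sum>j<n. A $$ (i,j) * v j) = 0"
    and s: "s < n"
  shows "v s = 0"
proof -
  have "det A * v s = (\<Sum>j<n. if s = j then det A * v j else 0)"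
    using s by simp
  also have "\<dots> = (\<Sum>j<n. (\<Sum>k<n. cofactor A k s * A $$ (k,j)) * v j)"
    by (intro sum.cong refl) (auto simp: adj_col[OF A s])
  also have "\<dots> = (\<Sum>k<n. cofactor A k s * (\<Sum>j<n. A $$ (k,j) * v j))"
    by (simp add: sum_distrib_left sum_distrib_right mult.assoc) (rule sum.swap)
  also have "\<dots> = 0" using v by simp
  finally show ?thesis using d by simp
qed

lemma kernel_trivial_left:
  fixes A :: "complex mat"
  assumes A: "A \<in> carrier_mat n n" and d: "det A \<noteq> 0"
    and v: "\<And>j. j < n \<Longrightarrow> (\<Sum>i<n. r i * A $$ (i,j)) = 0"
    and s: "s < n"
  shows "r s = 0"
proof -
  have "det A * r s = (\<Sum>i<n. if s = i then det A * r i else 0)"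
    using s by simp
  also have "\<dots> = (\<Sum>i<n. r i * (\<Sum>k<n. A $$ (i,k) * cofactor A s k))"
    by (intro sum.cong refl) (auto simp: adj_row[OF A _ s])
  also have "\<dots> = (\<Sum>k<n. (\<Sum>i<n. r i * A $$ (i,k)) * cofactor A s k)"
    by (simp add: sum_distrib_left sum_distrib_right mult.assoc) (rule sum.swap)
  also have "\<dots> = 0" using v by simp
  finally show ?thesis using d by simp
qed




definition Wm :: "nat \<Rightarrow> (nat \<Rightarrow> complex \<Rightarrow> complex) \<Rightarrow> complex \<Rightarrow> complex mat" where
  "Wm m gs x = mat m m (\<lambda>(i,j). (deriv ^^ i) (gs j) x)"

lemma wronskian_Wm: "wronskian m gs x = det (Wm m gs x)"
  unfolding wronskian_def Wm_def ..

lemma Wm_carrier: "Wm m gs x \<in> carrier_mat m m"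
  unfolding Wm_def by simp

lemma Wm_index: "i < m \<Longrightarrow> j < m \<Longrightarrow> Wm m gs x $$ (i,j) = (deriv ^^ i) (gs j) x"
  unfolding Wm_def by simp

lemma mat_delete_Wm:
  "mat_delete (Wm (Suc m) gs x) m j = mat m m (\<lambda>(i',j'). (deriv ^^ i') (gs (if j' < j then j' else Suc j')) x)"
  unfolding mat_delete_def Wm_def by (rule eq_matI) auto

lemma mat_delete_Wm_last:
  "mat_delete (Wm (Suc m) gs x) m m = Wm m gs x"
  unfolding mat_delete_def Wm_def by (rule eq_matI) auto

theorem wr_nonzero:
  "(\<forall>j<m. gs j holomorphic_on UNIV) \<Longrightarrow>
   (\<forall>a. (\<forall>x. (\<Sum>j<m. a j * gs j x) = 0) \<longrightarrow> (\<forall>j<m. a j = 0)) \<Longrightarrow>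
   \<exists>x. wronskian m gs x \<noteq> 0"
proof (induction m)
  case 0
  show ?case unfolding wronskian_Wm using det_dim_zero[OF Wm_carrier[of 0]] by simp
next
  case (Suc m)
  note holo = Suc.prems(1) and indep = Suc.prems(2)
  have "\<forall>a. (\<forall>x. (\<Sum>j<m. a j * gs j x) = 0) \<longrightarrow> (\<forall>j<m. a j = 0)"
  proof (intro allI impI)
    fix a j assume z: "\<forall>x. (\<Sum>j<m. a j * gs j x) = 0" and j: "j < m"
    have "\<forall>x. (\<Sum>j<Suc m. (a(m := 0)) j * gs j x) = 0" using z by simp
    then have "(a(m := 0)) j = 0" using indep j by (metis less_SucI)
    then show "a j = 0" using j by simp
  qed
  with Suc.IH holo obtain x0 where x0: "wronskian m gs x0 \<noteq> 0" by auto
  show ?case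
  proof (rule ccontr)
    assume "\<not> ?case"
    then have W0: "\<And>x. wronskian (Suc m) gs x = 0" by auto
    define G where "G x = Wm (Suc m) gs x" for x
    have Gc: "G x \<in> carrier_mat (Suc m) (Suc m)" for x unfolding G_def by (rule Wm_carrier)
    define b where "b j x = cofactor (G x) m j" for j x
    have rel: "(\<Sum>j<Suc m. (deriv ^^ i) (gs j) x * b j x) = 0" if "i \<le> m" for x i
    proof -
      have "(\<Sum>k<Suc m. G x $$ (i,k) * cofactor (G x) m k) = 0"
        using adj_row[OF Gc, of i m x] that W0[of x] by (simp add: G_def wronskian_Wm)
      then show ?thesis unfolding b_def using that
        by (simp add: G_def Wm_index)
    qed
    have bform: "b j = (\<lambda>x. (-1)^(m+j) * det (mat m m (\<lambda>(i',j'). (deriv ^^ i') (gs (if j' < j then j' else Suc j')) x)))" for j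
      by (rule ext) (simp add: b_def G_def cofactor_def mat_delete_Wm)
    have bholo: "b j holomorphic_on UNIV" if "j < Suc m" for j
      unfolding bform
      by (intro holomorphic_intros holo_det) (use holo that in \<open>auto intro!: holomorphic_higher_deriv\<close>)
    have bm: "b m x = wronskian m gs x" for x
      unfolding b_def G_def cofactor_def mat_delete_Wm_last wronskian_Wm by simp
    have drel: "(\<Sum>j<Suc m. (deriv ^^ i) (gs j) x * deriv (b j) x) = 0" if "i < m" for x i
    proof -
      define h where "h = (\<lambda>x. \<Sum>j<Suc m. (deriv ^^ i) (gs j) x * b j x)"
      have "(h has_field_derivative (\<Sum>j<Suc m. (deriv ^^ Suc i) (gs j) x * b j x + deriv (b j) x * (deriv ^^ i) (gs j) x)) (at x)"
        unfolding h_def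
        by (intro DERIV_sum DERIV_mult has_field_derivative_higher_deriv[of _ UNIV] holomorphic_derivI[of _ UNIV])
           (use holo bholo in auto)
      moreover have "h = (\<lambda>x. 0)" unfolding h_def using rel that by (auto simp: fun_eq_iff)
      then have "(h has_field_derivative 0) (at x)" by simp
      ultimately have "(\<Sum>j<Suc m. (deriv ^^ Suc i) (gs j) x * b j x + deriv (b j) x * (deriv ^^ i) (gs j) x) = 0"
        by (rule DERIV_unique)
      then have "(\<Sum>j<Suc m. (deriv ^^ Suc i) (gs j) x * b j x) + (\<Sum>j<Suc m. (deriv ^^ i) (gs j) x * deriv (b j) x) = 0"
        by (simp add: sum.distrib mult.commute)
      then show ?thesis using rel[of "Suc i" x] that by simp
    qed
    define w where "w j x = b m x * deriv (b j) x - deriv (b m) x * b j x" for j x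
    have wrel: "(\<Sum>j<m. (deriv ^^ i) (gs j) x * w j x) = 0" if "i < m" for x i
    proof -
      have "(\<Sum>j<Suc m. (deriv ^^ i) (gs j) x * w j x) =
          b m x * (\<Sum>j<Suc m. (deriv ^^ i) (gs j) x * deriv (b j) x) - deriv (b m) x * (\<Sum>j<Suc m. (deriv ^^ i) (gs j) x * b j x)"
        unfolding w_def by (simp add: sum_distrib_left sum_subtractf algebra_simps)
      also have "\<dots> = 0" using drel[OF that] rel[of i x] that by simp
      finally show ?thesis by (simp add: w_def)
    qed
    have "continuous (at x0) (b m)"
      using bholo[of m] holomorphic_on_imp_continuous_on continuous_on_eq_continuous_at by blast
    moreover have "b m x0 \<noteq> 0" using x0 bm by simp
    ultimately obtain e where e: "e > 0" "\<And>y. dist x0 y < e \<Longrightarrow> b m y \<noteq> 0"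
      using continuous_at_avoid by blast
    have bmne: "b m y \<noteq> 0" if "y \<in> ball x0 e" for y using e that by auto
    have wz: "w j y = 0" if "y \<in> ball x0 e" "j < m" for y j
    proof (rule kernel_trivial[OF Wm_carrier[of m gs y], of "\<lambda>j. w j y"])
      show "det (Wm m gs y) \<noteq> 0" using bmne[OF that(1)] bm by (simp add: wronskian_Wm)
      show "(\<Sum>j<m. Wm m gs y $$ (i, j) * w j y) = 0" if "i < m" for i
        using wrel[OF that, of y] that by (simp add: Wm_index)
      show "j < m" by fact
    qed
    have wm: "w m y = 0" for y unfolding w_def by simp
    have const: "\<exists>cj. \<forall>y\<in>ball x0 e. b j y / b m y = cj" if "j < Suc m" for j
    proof (rule has_field_derivative_zero_constant[OF convex_ball])
      fix y assume y: "y \<in> ball x0 e"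
      have "((\<lambda>y. b j y / b m y) has_field_derivative (deriv (b j) y * b m y - b j y * deriv (b m) y) / (b m y * b m y)) (at y within ball x0 e)"
        by (intro DERIV_divide holomorphic_derivI[of _ UNIV] bholo bmne y) (use that in auto)
      moreover have "deriv (b j) y * b m y - b j y * deriv (b m) y = w j y"
        unfolding w_def by (simp add: algebra_simps)
      moreover have "w j y = 0" using that wz[OF y] wm by (cases "j = m") auto
      ultimately show "((\<lambda>y. b j y / b m y) has_field_derivative 0) (at y within ball x0 e)" by simp
    qed
    define a where "a j = b j x0 / b m x0" for j
    have x0b: "x0 \<in> ball x0 e" using e by simp
    have ba: "b j y = a j * b m y" if yb: "y \<in> ball x0 e" and jm: "j < Suc m" for y j
    proof -
      obtain cj where "\<forall>y\<in>ball x0 e. b j y / b m y = cj" using const[OF jm] by blast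
      then have "b j y / b m y = a j" unfolding a_def using yb x0b by auto
      then show ?thesis using bmne[OF yb] by (simp add: field_simps)
    qed
    have zb: "(\<Sum>j<Suc m. a j * gs j y) = 0" if "y \<in> ball x0 e" for y
    proof -
      have "0 = (\<Sum>j<Suc m. gs j y * b j y)" using rel[of 0 y] by simp
      also have "\<dots> = b m y * (\<Sum>j<Suc m. a j * gs j y)"
        unfolding sum_distrib_left
      proof (intro sum.cong refl)
        fix j assume "j \<in> {..<Suc m}"
        then have "j < Suc m" by simp
        note eq = ba[OF that this]
        show "gs j y * b j y = b m y * (a j * gs j y)" by (simp only: eq mult_ac)
      qed
      finally show ?thesis using bmne[OF that] by simp
    qed
    have "\<forall>x. (\<Sum>j<Suc m. a j * gs j x) = 0"
    proof
      fix x
      have hol: "(\<lambda>x. \<Sum>j<Suc m. a j * gs j x) holomorphic_on UNIV"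
        by (intro holomorphic_intros) (use holo in auto)
      have "(\<Sum>j<Suc m. a j * gs j x) = (\<lambda>x. 0) x"
        by (rule analytic_continuation_open[of "ball x0 e" UNIV])
           (use e zb hol in \<open>auto simp: connected_UNIV\<close>)
      then show "(\<Sum>j<Suc m. a j * gs j x) = 0" by simp
    qed
    then have "a m = 0" using indep by blast
    moreover have "a m = 1" unfolding a_def using \<open>b m x0 \<noteq> 0\<close> by simp
    ultimately show False by simp
  qed
qed




definition Af :: "nat \<Rightarrow> (nat \<Rightarrow> complex \<Rightarrow> complex) \<Rightarrow> nat \<Rightarrow> complex \<Rightarrow> complex" where
  "Af n g i x = (-1)^(i+n) * det (mat n n (\<lambda>(i',j'). (deriv ^^ (if i' < i then i' else Suc i')) (g j') x))"

definition Gf :: "nat \<Rightarrow> (nat \<Rightarrow> complex \<Rightarrow> complex) \<Rightarrow> (complex \<Rightarrow> complex) \<Rightarrow> complex \<Rightarrow> complex mat" where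
  "Gf n g f x = Wm (Suc n) (\<lambda>j. if j < n then g j else f) x"

lemma Kbar_Gf: "Kbar n c f x = det (Gf n (\<lambda>j. dist_exp (c j)) f x)"
  unfolding Kbar_def wronskian_Wm Gf_def ..

lemma mat_delete_Gf:
  "mat_delete (Gf n g f x) i n = mat n n (\<lambda>(i',j'). (deriv ^^ (if i' < i then i' else Suc i')) (g j') x)"
  unfolding mat_delete_def Gf_def Wm_def by (rule eq_matI) auto

lemma Gf_index_n: "i < Suc n \<Longrightarrow> Gf n g f x $$ (i,n) = (deriv ^^ i) f x"
  unfolding Gf_def by (simp add: Wm_index)

lemma Kexp: "det (Gf n g f x) = (\<Sum>i<Suc n. Af n g i x * (deriv ^^ i) f x)"
proof -
  have C: "Gf n g f x \<in> carrier_mat (Suc n) (Suc n)" unfolding Gf_def by (rule Wm_carrier)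
  have "det (Gf n g f x) = (\<Sum>i<Suc n. Gf n g f x $$ (i,n) * cofactor (Gf n g f x) i n)"
    by (rule laplace_expansion_column[OF C]) simp
  also have "\<dots> = (\<Sum>i<Suc n. Af n g i x * (deriv ^^ i) f x)"
    by (intro sum.cong refl)
       (simp add: cofactor_def mat_delete_Gf Af_def Gf_index_n)
  finally show ?thesis .
qed

lemma Af_n: "Af n g n x = wronskian n g x"
proof -
  have "mat n n (\<lambda>(i',j'). (deriv ^^ (if i' < n then i' else Suc i')) (g j') x) = Wm n g x"
    unfolding Wm_def by (rule eq_matI) auto
  then show ?thesis unfolding Af_def wronskian_Wm by simp
qed

lemma Af_polyexp: "(\<And>j. j < n \<Longrightarrow> polyexp (g j)) \<Longrightarrow> polyexp (Af n g i)"
  unfolding Af_def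
  by (intro polyexp_cmult polyexp_det polyexp_higher_deriv) auto

lemma Kzero: assumes "j < n" shows "det (Gf n g (g j) x) = 0"
proof (rule det_identical_columns[of _ "Suc n" j n])
  show "Gf n g (g j) x \<in> carrier_mat (Suc n) (Suc n)" unfolding Gf_def by (rule Wm_carrier)
  show "col (Gf n g (g j) x) j = col (Gf n g (g j) x) n"
    unfolding Gf_def Wm_def using assms by (intro eq_vecI) auto
qed (use assms in auto)

lemma polyexp_if: "polyexp F \<Longrightarrow> polyexp (\<lambda>x. if C then F x else 0)"
  by (cases C) (auto simp: polyexp_const)

lemma pow_deriv:
  assumes tau: "polyexp tau"
  shows "i \<le> E \<Longrightarrow> \<exists>h. polyexp h \<and> (\<forall>x. (deriv ^^ i) (\<lambda>x. tau x ^ E) x = tau x ^ (E - i) * h x)"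
proof (induction i)
  case 0
  show ?case by (intro exI[of _ "\<lambda>x. 1"]) (simp add: polyexp_const)
next
  case (Suc i)
  then obtain h where h: "polyexp h" "\<And>x. (deriv ^^ i) (\<lambda>x. tau x ^ E) x = tau x ^ (E - i) * h x" by auto
  obtain e where e: "E - i = Suc e" using Suc.prems by (metis Suc_diff_le Suc_le_lessD less_imp_Suc_add add_Suc diff_Suc_Suc diff_add_inverse le_add1 le_add_diff_inverse Suc_le_D)
  have fe: "(deriv ^^ i) (\<lambda>x. tau x ^ E) = (\<lambda>x. tau x ^ Suc e * h x)" using h(2) e by (auto simp: fun_eq_iff)
  define h' where "h' x = of_nat (Suc e) * deriv tau x * h x + tau x * deriv h x" for x
  have "deriv (\<lambda>x. tau x ^ Suc e * h x) x = tau x ^ e * h' x" for x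
  proof -
    have dt: "(tau has_field_derivative deriv tau x) (at x)"
      using polyexp_holo[OF tau, of UNIV] holomorphic_derivI by blast
    have dh: "(h has_field_derivative deriv h x) (at x)"
      using polyexp_holo[OF h(1), of UNIV] holomorphic_derivI by blast
    have "((\<lambda>x. tau x ^ Suc e * h x) has_field_derivative
        (of_nat (Suc e) * tau x ^ e * deriv tau x) * h x + deriv h x * tau x ^ Suc e) (at x)"
      by (intro DERIV_mult DERIV_power[OF dt, THEN DERIV_cong] dh) simp
    then show ?thesis unfolding h'_def
      by (rule DERIV_imp_deriv[THEN trans]) (simp add: algebra_simps)
  qed
  moreover have "polyexp h'" unfolding h'_def
    by (intro polyexp_add polyexp_mult polyexp_const polyexp_deriv tau h(1))
  moreover have "E - Suc i = e" using e by simp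
  ultimately show ?case using fe by (intro exI[of _ h']) auto
qed




lemma mat_delete_mat:
  "mat_delete (mat (Suc M) (Suc M) F) k s = mat M M (\<lambda>(i,j). F (if i < k then i else Suc i, if j < s then j else Suc j))"
  unfolding mat_delete_def by (rule eq_matI) auto

declare sum.lessThan_Suc[simp del]

lemma funpow_deriv_add: "(deriv ^^ a) ((deriv ^^ b) f) = (deriv ^^ (b + a)) f"
  by (metis add.commute funpow_add o_apply)

lemma sum_ind:
  fixes X :: complex and Y :: "nat \<Rightarrow> complex"
  assumes "(a::nat) < K"
  shows "(\<Sum>t<K. (if a = t then X else 0) * Y t) = X * Y a"
proof -
  have "(\<Sum>t<K. (if a = t then X else 0) * Y t) = (\<Sum>t<K. if a = t then X * Y t else 0)"
    by (intro sum.cong) auto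
  also have "\<dots> = X * Y a" using assms by simp
  finally show ?thesis .
qed

locale core =
  fixes n M :: nat and g A :: "nat \<Rightarrow> complex \<Rightarrow> complex" and l :: "nat \<Rightarrow> complex"
  assumes gpe: "\<And>j. j < n \<Longrightarrow> polyexp (g j)"
    and Ape: "\<And>i. polyexp (A i)"
    and An: "\<And>x. A n x = wronskian n g x"
    and Kg: "\<And>j x. j < n \<Longrightarrow> (\<Sum>i<Suc n. A i x * (deriv ^^ i) (g j) x) = 0"
    and Lg: "\<And>j x. j < n \<Longrightarrow> (\<Sum>t<Suc (n + M). l t * (deriv ^^ t) (g j) x) = 0"
begin

abbreviation "N \<equiv> n + M"
definition "K f = (\<lambda>x. \<Sum>i<Suc n. A i x * (deriv ^^ i) f x)"
abbreviation "tau \<equiv> A n"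

definition "B k t x = (\<Sum>i<Suc n. \<Sum>s=0..k. (if i + (k - s) = t then of_nat (k choose s) * (deriv ^^ s) (A i) x else 0))"

lemma K_holo: "f holomorphic_on UNIV \<Longrightarrow> K f holomorphic_on UNIV"
  unfolding K_def
  by (intro holomorphic_intros polyexp_holo[OF Ape] holomorphic_higher_deriv) auto

lemma KD:
  assumes f: "f holomorphic_on UNIV" and k: "k \<le> M"
  shows "(deriv ^^ k) (K f) x = (\<Sum>t<Suc N. B k t x * (deriv ^^ t) f x)"
proof -
  have hA: "A i holomorphic_on UNIV" for i by (rule polyexp_holo[OF Ape])
  have hf: "(deriv ^^ i) f holomorphic_on UNIV" for i by (rule holomorphic_higher_deriv[OF f]) simp
  have "(deriv ^^ k) (K f) x = (\<Sum>i<Suc n. (deriv ^^ k) (\<lambda>x. A i x * (deriv ^^ i) f x) x)"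
    unfolding K_def by (rule higher_deriv_sum) (auto intro!: holomorphic_intros hA hf)
  also have "\<dots> = (\<Sum>i<Suc n. \<Sum>s=0..k. of_nat (k choose s) * (deriv ^^ s) (A i) x * (deriv ^^ (i + (k - s))) f x)"
  proof (intro sum.cong refl)
    fix i
    have "(deriv ^^ k) (\<lambda>x. A i x * (deriv ^^ i) f x) x =
        (\<Sum>s=0..k. of_nat (k choose s) * (deriv ^^ s) (A i) x * (deriv ^^ (k - s)) ((deriv ^^ i) f) x)"
      by (rule higher_deriv_mult[OF hA hf]) auto
    also have "\<dots> = (\<Sum>s=0..k. of_nat (k choose s) * (deriv ^^ s) (A i) x * (deriv ^^ (i + (k - s))) f x)"
      by (intro sum.cong refl) (simp only: funpow_deriv_add)
    finally show "(deriv ^^ k) (\<lambda>x. A i x * (deriv ^^ i) f x) x =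
        (\<Sum>s=0..k. of_nat (k choose s) * (deriv ^^ s) (A i) x * (deriv ^^ (i + (k - s))) f x)" .
  qed
  also have "\<dots> = (\<Sum>i<Suc n. \<Sum>s=0..k. \<Sum>t<Suc N. (if i + (k - s) = t then of_nat (k choose s) * (deriv ^^ s) (A i) x else 0) * (deriv ^^ t) f x)"
  proof (intro sum.cong refl)
    fix i s assume "i \<in> {..<Suc n}" "s \<in> {0..k}"
    then have "i + (k - s) < Suc N" using k by auto
    then show "of_nat (k choose s) * (deriv ^^ s) (A i) x * (deriv ^^ (i + (k - s))) f x =
      (\<Sum>t<Suc N. (if i + (k - s) = t then of_nat (k choose s) * (deriv ^^ s) (A i) x else 0) * (deriv ^^ t) f x)"
      by (simp add: sum_ind)
  qed
  also have "\<dots> = (\<Sum>t<Suc N. \<Sum>i<Suc n. \<Sum>s=0..k. (if i + (k - s) = t then of_nat (k choose s) * (deriv ^^ s) (A i) x else 0) * (deriv ^^ t) f x)"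
    by (subst sum.swap) (simp add: sum.swap[of _ "{0..k}"])
  also have "\<dots> = (\<Sum>t<Suc N. B k t x * (deriv ^^ t) f x)"
    unfolding B_def by (simp add: sum_distrib_right)
  finally show ?thesis .
qed

lemma B_pe: "polyexp (B k t)"
  unfolding B_def
  by (rule polyexp_sum, rule polyexp_sum, rule polyexp_if, rule polyexp_cmult,
      rule polyexp_higher_deriv, rule Ape)

lemma B_upper: "k < s' \<Longrightarrow> B k (n + s') x = 0"
  unfolding B_def by (intro sum.neutral ballI) auto

lemma B_diag: "B k (n + k) x = tau x"
proof -
  have "B k (n + k) x = (\<Sum>i<Suc n. if i = n then A n x else 0)"
    unfolding B_def
  proof (intro sum.cong refl)
    fix i assume i: "i \<in> {..<Suc n}"
    show "(\<Sum>s = 0..k. if i + (k - s) = n + k then of_nat (k choose s) * (deriv ^^ s) (A i) x else 0) =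
        (if i = n then A n x else 0)"
    proof (cases "i = n")
      case True
      have "(\<Sum>s = 0..k. if i + (k - s) = n + k then of_nat (k choose s) * (deriv ^^ s) (A i) x else 0)
          = (\<Sum>s = 0..k. if s = 0 then of_nat (k choose s) * (deriv ^^ s) (A i) x else 0)"
        using True by (intro sum.cong refl) auto
      also have "\<dots> = A n x" using True by simp
      finally show ?thesis using True by simp
    next
      case False
      then have "i < n" using i by simp
      then show ?thesis by (intro trans[OF sum.neutral]) auto
    qed
  qed
  also have "\<dots> = tau x" by simp
  finally show ?thesis .
qed

definition "T x = mat (Suc M) (Suc M) (\<lambda>(k,s). B k (n + s) x)"

lemma T_carrier: "T x \<in> carrier_mat (Suc M) (Suc M)" unfolding T_def by simp

lemma det_T: "det (T x) = tau x ^ Suc M"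
proof -
  have "det (T x) = prod_list (diag_mat (T x))"
    by (rule det_lower_triangular[OF _ T_carrier]) (simp add: T_def B_upper)
  also have "diag_mat (T x) = map (\<lambda>i. tau x) [0..<Suc M]"
    unfolding diag_mat_def T_def by (simp add: B_diag)
  also have "prod_list \<dots> = tau x ^ Suc M" by (simp add: map_replicate_const)
  finally show ?thesis .
qed

definition "q k x = (\<Sum>s<Suc M. l (n + s) * cofactor (T x) k s)"

lemma q_pe: "polyexp (q k)"
proof -
  have eq: "q k = (\<lambda>x. \<Sum>s<Suc M. l (n + s) * ((-1)^(k+s) * det (mat M M (\<lambda>(i,j).
      B (if i < k then i else Suc i) (n + (if j < s then j else Suc j)) x))))"
    unfolding q_def cofactor_def T_def mat_delete_mat by (rule ext) (simp add: case_prod_beta)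
  have "polyexp (\<lambda>x. \<Sum>s<Suc M. l (n + s) * ((-1)^(k+s) * det (mat M M (\<lambda>(i,j).
      B (if i < k then i else Suc i) (n + (if j < s then j else Suc j)) x))))"
    by (intro polyexp_sum polyexp_cmult polyexp_det B_pe)
  then show ?thesis using eq by simp
qed

lemma qT: assumes "s' < Suc M"
  shows "(\<Sum>k<Suc M. q k x * B k (n + s') x) = tau x ^ Suc M * l (n + s')"
proof -
  have "(\<Sum>k<Suc M. q k x * B k (n + s') x) = (\<Sum>k<Suc M. \<Sum>s<Suc M. l (n + s) * (cofactor (T x) k s * T x $$ (k, s')))"
    unfolding q_def using assms by (intro sum.cong refl) (simp add: sum_distrib_right T_def mult.assoc)
  also have "\<dots> = (\<Sum>s<Suc M. l (n + s) * (\<Sum>k<Suc M. cofactor (T x) k s * T x $$ (k, s')))"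
    by (subst sum.swap) (simp add: sum_distrib_left)
  also have "\<dots> = (\<Sum>s<Suc M. if s' = s then l (n + s) * det (T x) else 0)"
    by (intro sum.cong refl) (use adj_col[OF T_carrier _ assms] in auto)
  also have "\<dots> = tau x ^ Suc M * l (n + s')" using assms by (simp add: det_T)
  finally show ?thesis .
qed

lemma rem: assumes tx: "tau x \<noteq> 0" and t: "t < Suc N"
  shows "(\<Sum>k<Suc M. q k x * B k t x) = tau x ^ Suc M * l t"
proof (cases "n \<le> t")
  case True
  have "t = n + (t - n)" "t - n < Suc M" using True t by auto
  then show ?thesis using qT[of "t - n" x] by simp
next
  case False
  define r where "r t = tau x ^ Suc M * l t - (\<Sum>k<Suc M. q k x * B k t x)" for t
  have rz: "r t = 0" if "n \<le> t" "t < Suc N" for t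
  proof -
    have "t = n + (t - n)" "t - n < Suc M" using that by auto
    then show ?thesis unfolding r_def using qT[of "t - n" x] by simp
  qed
  have "(\<Sum>i<n. r i * Wm n g x $$ (i, j)) = 0" if j: "j < n" for j
  proof -
    have Kz: "K (g j) = (\<lambda>x. 0)" unfolding K_def using Kg[OF j] by auto
    have hg: "g j holomorphic_on UNIV" by (rule polyexp_holo[OF gpe[OF j]])
    have "(\<Sum>t<Suc N. r t * (deriv ^^ t) (g j) x) =
      tau x ^ Suc M * (\<Sum>t<Suc N. l t * (deriv ^^ t) (g j) x) - (\<Sum>k<Suc M. q k x * (\<Sum>t<Suc N. B k t x * (deriv ^^ t) (g j) x))"
    proof -
      have e1: "(\<Sum>t<Suc N. r t * (deriv ^^ t) (g j) x) = (\<Sum>t<Suc N. tau x ^ Suc M * (l t * (deriv ^^ t) (g j) x))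
          - (\<Sum>t<Suc N. \<Sum>k<Suc M. q k x * (B k t x * (deriv ^^ t) (g j) x))"
        unfolding r_def by (simp add: left_diff_distrib sum_subtractf sum_distrib_right mult.assoc)
      have e2: "(\<Sum>t<Suc N. \<Sum>k<Suc M. q k x * (B k t x * (deriv ^^ t) (g j) x)) =
          (\<Sum>k<Suc M. q k x * (\<Sum>t<Suc N. B k t x * (deriv ^^ t) (g j) x))"
        by (subst sum.swap) (simp add: sum_distrib_left)
      show ?thesis unfolding e1 e2 by (simp add: sum_distrib_left)
    qed
    also have "\<dots> = 0"
    proof -
      have "(\<Sum>t<Suc N. B k t x * (deriv ^^ t) (g j) x) = 0" if "k < Suc M" for k
        using KD[OF hg, of k x] that Kz by simp
      then show ?thesis using Lg[OF j] by simp
    qed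
    finally have "(\<Sum>t<Suc N. r t * (deriv ^^ t) (g j) x) = 0" .
    moreover have "(\<Sum>t<Suc N. r t * (deriv ^^ t) (g j) x) = (\<Sum>t<n. r t * (deriv ^^ t) (g j) x)"
      by (rule sum.mono_neutral_right) (auto simp: rz)
    ultimately show ?thesis using j by (simp add: Wm_index)
  qed
  then have "r t = 0"
    using kernel_trivial_left[OF Wm_carrier[of n g x], of r t] False tx An by (simp add: wronskian_Wm)
  then show ?thesis unfolding r_def by simp
qed

lemma main_pt:
  assumes f: "f holomorphic_on UNIV" and tx: "tau x \<noteq> 0"
  shows "tau x ^ Suc M * (\<Sum>t<Suc N. l t * (deriv ^^ t) f x) = (\<Sum>k<Suc M. q k x * (deriv ^^ k) (K f) x)"
proof -
  have "(\<Sum>k<Suc M. q k x * (deriv ^^ k) (K f) x) = (\<Sum>k<Suc M. q k x * (\<Sum>t<Suc N. B k t x * (deriv ^^ t) f x))"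
    by (intro sum.cong refl) (simp add: KD[OF f])
  also have "\<dots> = (\<Sum>t<Suc N. (\<Sum>k<Suc M. q k x * B k t x) * (deriv ^^ t) f x)"
    by (simp add: sum_distrib_left sum_distrib_right mult.assoc) (rule sum.swap)
  also have "\<dots> = (\<Sum>t<Suc N. tau x ^ Suc M * l t * (deriv ^^ t) f x)"
    by (intro sum.cong refl) (simp add: rem[OF tx])
  finally show ?thesis by (simp add: sum_distrib_left mult.assoc)
qed

end




lemma regroup2:
  fixes X :: "nat \<Rightarrow> nat \<Rightarrow> complex" and Y :: "nat \<Rightarrow> complex"
  shows "(\<Sum>k<Suc M. \<Sum>i=0..k. X k i * Y (k - i)) =
         (\<Sum>j<Suc M. (\<Sum>k<Suc M. \<Sum>i=0..k. if k - i = j then X k i else 0) * Y j)"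
proof -
  have "(\<Sum>j<Suc M. (\<Sum>k<Suc M. \<Sum>i=0..k. if k - i = j then X k i else 0) * Y j) =
        (\<Sum>j<Suc M. \<Sum>k<Suc M. \<Sum>i=0..k. if k - i = j then X k i * Y j else 0)"
    by (auto simp: sum_distrib_right intro!: sum.cong)
  also have "\<dots> = (\<Sum>k<Suc M. \<Sum>j<Suc M. \<Sum>i=0..k. if k - i = j then X k i * Y j else 0)"
    by (rule sum.swap)
  also have "\<dots> = (\<Sum>k<Suc M. \<Sum>i=0..k. \<Sum>j<Suc M. if k - i = j then X k i * Y j else 0)"
    by (rule sum.cong[OF refl], rule sum.swap)
  also have "\<dots> = (\<Sum>k<Suc M. \<Sum>i=0..k. X k i * Y (k - i))"
    by (intro sum.cong refl) auto
  finally show ?thesis by simp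
qed

context core begin

lemma final:
  assumes x0: "tau x0 \<noteq> 0"
  shows "\<exists>Q pi. polyexp pi \<and> pi \<noteq> (\<lambda>_. 0) \<and> (\<forall>j. polyexp (Q j)) \<and>
     (\<forall>f. f holomorphic_on UNIV \<longrightarrow> (\<forall>x. pi x \<noteq> 0 \<longrightarrow>
        (\<Sum>t<Suc N. l t * (deriv ^^ t) f x) = (\<Sum>j<Suc M. Q j x * (deriv ^^ j) (\<lambda>y. K f y / pi y) x)))"
proof -
  define E where "E = Suc M + M"
  have "\<forall>i. \<exists>h. i \<le> E \<longrightarrow> polyexp h \<and> (\<forall>x. (deriv ^^ i) (\<lambda>x. tau x ^ E) x = tau x ^ (E - i) * h x)"
    using pow_deriv[OF Ape] by blast
  from choice[OF this] obtain hh where hh: "\<And>i. i \<le> E \<Longrightarrow> polyexp (hh i) \<and> (\<forall>x. (deriv ^^ i) (\<lambda>x. tau x ^ E) x = tau x ^ (E - i) * hh i x)"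
    by blast
  define pi where "pi = (\<lambda>x. tau x ^ E)"
  define Q where "Q j x = (\<Sum>k<Suc M. \<Sum>i=0..k. if k - i = j then q k x * of_nat (k choose i) * tau x ^ (M - i) * hh i x else 0)" for j x
  have pipe: "polyexp pi" unfolding pi_def by (rule polyexp_power[OF Ape])
  have pinz: "pi \<noteq> (\<lambda>_. 0)"
  proof
    assume "pi = (\<lambda>_. 0)"
    then have "tau x0 ^ E = 0" unfolding pi_def by metis
    then show False using x0 by simp
  qed
  have Qpe: "polyexp (Q j)" for j
    unfolding Q_def
  proof (rule polyexp_sum, rule polyexp_sum, rule polyexp_if)
    fix k i assume k: "k \<in> {..<Suc M}" and i: "i \<in> {0..k}"
    then have "i \<le> E" unfolding E_def by auto
    then have "polyexp (hh i)" using hh by blast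
    then show "polyexp (\<lambda>x. q k x * of_nat (k choose i) * tau x ^ (M - i) * hh i x)"
      by (intro polyexp_mult polyexp_const polyexp_power Ape q_pe)
  qed
  have main: "(\<Sum>t<Suc N. l t * (deriv ^^ t) f x) = (\<Sum>j<Suc M. Q j x * (deriv ^^ j) (\<lambda>y. K f y / pi y) x)"
    if f: "f holomorphic_on UNIV" and px: "pi x \<noteq> 0" for f x
  proof -
    have tx: "tau x \<noteq> 0" using px unfolding pi_def E_def by auto
    define Opn where "Opn = {y. tau y \<noteq> 0}"
    have tc: "continuous_on UNIV tau" using polyexp_holo[OF Ape] holomorphic_on_imp_continuous_on by blast
    have oOpn: "open Opn" unfolding Opn_def by (rule open_Collect_neq[OF tc continuous_on_const])
    have xOpn: "x \<in> Opn" using tx Opn_def by simp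
    have piOpn: "pi y \<noteq> 0" if "y \<in> Opn" for y using that unfolding Opn_def pi_def by simp
    define v where "v = (\<lambda>y. K f y / pi y)"
    have hpi: "pi holomorphic_on Opn" using polyexp_holo[OF pipe] by blast
    have hv: "v holomorphic_on Opn" unfolding v_def
      by (intro holomorphic_on_divide hpi piOpn) (use K_holo[OF f] holomorphic_on_subset in auto)
    have Dk: "(deriv ^^ k) (K f) x = tau x ^ Suc M * (\<Sum>i=0..k. of_nat (k choose i) * (tau x ^ (M - i) * hh i x) * (deriv ^^ (k - i)) v x)"
      if k: "k \<le> M" for k
    proof -
      have "eventually (\<lambda>y. K f y = pi y * v y) (nhds x)"
        using eventually_nhds_in_open[OF oOpn xOpn] by eventually_elim (simp add: v_def piOpn)
      then have "(deriv ^^ k) (K f) x = (deriv ^^ k) (\<lambda>y. pi y * v y) x"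
        by (rule higher_deriv_cong_ev) simp
      also have "\<dots> = (\<Sum>i=0..k. of_nat (k choose i) * (deriv ^^ i) pi x * (deriv ^^ (k - i)) v x)"
        by (rule higher_deriv_mult[OF hpi hv oOpn xOpn])
      also have "\<dots> = (\<Sum>i=0..k. of_nat (k choose i) * (tau x ^ Suc M * (tau x ^ (M - i) * hh i x)) * (deriv ^^ (k - i)) v x)"
      proof (intro sum.cong refl)
        fix i assume "i \<in> {0..k}"
        then have i: "i \<le> M" "i \<le> E" using k unfolding E_def by auto
        have "(deriv ^^ i) pi x = tau x ^ (E - i) * hh i x" using hh[OF i(2)] unfolding pi_def by blast
        also have "E - i = Suc M + (M - i)" using i unfolding E_def by simp
        finally have "(deriv ^^ i) pi x = tau x ^ Suc M * (tau x ^ (M - i) * hh i x)"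
          by (simp add: power_add mult.assoc)
        then show "of_nat (k choose i) * (deriv ^^ i) pi x * (deriv ^^ (k - i)) v x =
            of_nat (k choose i) * (tau x ^ Suc M * (tau x ^ (M - i) * hh i x)) * (deriv ^^ (k - i)) v x" by simp
      qed
      also have "\<dots> = tau x ^ Suc M * (\<Sum>i=0..k. of_nat (k choose i) * (tau x ^ (M - i) * hh i x) * (deriv ^^ (k - i)) v x)"
        by (simp add: sum_distrib_left algebra_simps)
      finally show ?thesis .
    qed
    have "tau x ^ Suc M * (\<Sum>t<Suc N. l t * (deriv ^^ t) f x) = (\<Sum>k<Suc M. q k x * (deriv ^^ k) (K f) x)"
      by (rule main_pt[OF f tx])
    also have "\<dots> = tau x ^ Suc M * (\<Sum>k<Suc M. \<Sum>i=0..k. (q k x * of_nat (k choose i) * tau x ^ (M - i) * hh i x) * (deriv ^^ (k - i)) v x)"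
      unfolding sum_distrib_left
      by (intro sum.cong refl) (simp add: Dk sum_distrib_left algebra_simps)
    finally have "(\<Sum>t<Suc N. l t * (deriv ^^ t) f x) = (\<Sum>k<Suc M. \<Sum>i=0..k. (q k x * of_nat (k choose i) * tau x ^ (M - i) * hh i x) * (deriv ^^ (k - i)) v x)"
      using tx by simp
    also have "\<dots> = (\<Sum>j<Suc M. Q j x * (deriv ^^ j) v x)"
      unfolding Q_def by (rule regroup2)
    finally show ?thesis unfolding v_def .
  qed
  show ?thesis
    by (rule exI[of _ Q], rule exI[of _ pi]) (use pipe pinz Qpe main in blast)
qed

end



lemma peS_polyexp: "polyexp (peS L q)"
  unfolding peS_def by (rule polyexp_sum, rule polyexp_term)

theorem mainTheorem1:
  fixes n :: nat and c :: "nat \<Rightarrow> complex \<times> nat \<Rightarrow> complex"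
  assumes "n \<ge> 1"
    and "\<And>i. i < n \<Longrightarrow> is_dist (c i)"
    and "\<And>a. (\<And>p. (\<Sum>i<n. a i * c i p) = 0) \<Longrightarrow> (\<forall>i<n. a i = 0)"
  shows "\<exists>(L0 :: complex list) (Qbar :: (complex \<Rightarrow> complex) list)
            (KbarC :: (complex \<Rightarrow> complex) list) (pi :: complex \<Rightarrow> complex).
           (\<exists>i<length L0. L0 ! i \<noteq> 0) \<and>
           polyexp pi \<and> pi \<noteq> (\<lambda>_. 0) \<and>
           (\<forall>i<length Qbar. polyexp (Qbar ! i)) \<and>
           (\<forall>i<length KbarC. polyexp (KbarC ! i)) \<and>
           (\<forall>f. f holomorphic_on UNIV \<longrightarrow> apply_op KbarC f = Kbar n c f) \<and>
           (\<forall>f. f holomorphic_on UNIV \<longrightarrow>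
              (\<forall>x. pi x \<noteq> 0 \<longrightarrow>
                 apply_const_op L0 f x = apply_op Qbar (\<lambda>y. Kbar n c f y / pi y) x))"
proof -
  define S where "S = (\<Union>j<n. {p. c j p \<noteq> 0})"
  have Sfin: "finite S" unfolding S_def using assms(2) by (auto simp: is_dist_def)
  have sup: "{p. c j p \<noteq> 0} \<subseteq> S" if "j < n" for j unfolding S_def using that by auto
  define g where "g j = dist_exp (c j)" for j
  have gpe: "polyexp (g j)" if "j < n" for j
    unfolding g_def dist_exp_peS[OF Sfin sup[OF that]] by (rule peS_polyexp)
  have gholo: "\<forall>j<n. g j holomorphic_on UNIV" using gpe polyexp_holo by blast
  have gind: "\<forall>a. (\<forall>x. (\<Sum>j<n. a j * g j x) = 0) \<longrightarrow> (\<forall>j<n. a j = 0)"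
  proof (rule allI, rule impI)
    fix a assume z: "\<forall>x. (\<Sum>j<n. a j * g j x) = 0"
    define d where "d p = (\<Sum>j<n. a j * c j p)" for p
    have "\<forall>x. (\<Sum>p\<in>S. d p * x ^ snd p * exp (fst p * x)) = 0"
    proof
      fix x
      have "(\<Sum>j<n. a j * g j x) = (\<Sum>j<n. \<Sum>p\<in>S. a j * (c j p * x ^ snd p * exp (fst p * x)))"
        unfolding g_def by (intro sum.cong refl) (simp add: dist_exp_eq[OF Sfin sup] sum_distrib_left)
      also have "\<dots> = (\<Sum>p\<in>S. d p * x ^ snd p * exp (fst p * x))"
        unfolding d_def by (subst sum.swap) (simp add: sum_distrib_right mult.assoc)
      finally show "(\<Sum>p\<in>S. d p * x ^ snd p * exp (fst p * x)) = 0" using z by simp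
    qed
    then have dS: "\<forall>p\<in>S. d p = 0" by (rule expoly_indep[OF Sfin])
    have "d p = 0" for p
    proof (cases "p \<in> S")
      case True then show ?thesis using dS by blast
    next
      case False
      then have "c j p = 0" if "j < n" for j using sup[OF that] by auto
      then show ?thesis unfolding d_def by simp
    qed
    then show "\<forall>j<n. a j = 0" using assms(3) unfolding d_def by blast
  qed
  obtain x0 where x0: "wronskian n g x0 \<noteq> 0" using wr_nonzero[OF gholo gind] by blast
  have "\<exists>P. P \<noteq> 0 \<and> n \<le> degree P \<and> (\<forall>j<n. \<forall>x. apply_const_op (coeffs P) (dist_exp (c j)) x = 0)"
    by (rule L0_exists[OF Sfin]) (erule sup)
  then obtain P where P: "P \<noteq> 0" "n \<le> degree P" "\<forall>j<n. \<forall>x. apply_const_op (coeffs P) (dist_exp (c j)) x = 0"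
    by blast
  define M where "M = degree P - n"
  have NP: "n + M = degree P" using P(2) unfolding M_def by simp
  define l where "l t = coeff P t" for t
  define A where "A = Af n g"
  have L0eq: "apply_const_op (coeffs P) f x = (\<Sum>t<Suc (n + M). l t * (deriv ^^ t) f x)" for f x
    unfolding apply_const_op_coeffs[OF P(1)] opcK_def l_def NP ..
  have Kb: "Kbar n c f x = (\<Sum>i<Suc n. A i x * (deriv ^^ i) f x)" for f x
  proof -
    have "(\<lambda>j. dist_exp (c j)) = g" unfolding g_def ..
    then show ?thesis unfolding Kbar_Gf A_def by (simp add: Kexp)
  qed
  interpret core n M g A l
  proof
    show "\<And>j. j < n \<Longrightarrow> polyexp (g j)" by (rule gpe)
    show "\<And>i. polyexp (A i)" unfolding A_def by (rule Af_polyexp[OF gpe])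
    show "\<And>x. A n x = wronskian n g x" unfolding A_def by (rule Af_n)
    show "\<And>j x. j < n \<Longrightarrow> (\<Sum>i<Suc n. A i x * (deriv ^^ i) (g j) x) = 0"
      unfolding A_def using Kexp Kzero by metis
    show "\<And>j x. j < n \<Longrightarrow> (\<Sum>t<Suc (n + M). l t * (deriv ^^ t) (g j) x) = 0"
      using P(3) L0eq unfolding g_def by metis
  qed
  have "A n x0 \<noteq> 0" unfolding A_def Af_n using x0 .
  from final[OF this] obtain Q pi where Qpi: "polyexp pi" "pi \<noteq> (\<lambda>_. 0)" "\<forall>j. polyexp (Q j)"
    "\<forall>f. f holomorphic_on UNIV \<longrightarrow> (\<forall>x. pi x \<noteq> 0 \<longrightarrow>
        (\<Sum>t<Suc (n + M). l t * (deriv ^^ t) f x) = (\<Sum>j<Suc M. Q j x * (deriv ^^ j) (\<lambda>y. K f y / pi y) x))"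
    by blast
  have KK: "K f = Kbar n c f" for f unfolding K_def by (rule ext) (simp add: Kb)
  show ?thesis
  proof (rule exI[of _ "coeffs P"], rule exI[of _ "map Q [0..<Suc M]"], rule exI[of _ "map A [0..<Suc n]"],
      rule exI[of _ pi], intro conjI)
    show "\<exists>i<length (coeffs P). coeffs P ! i \<noteq> 0"
      using P(1) by (intro exI[of _ "degree P"]) (simp add: length_coeffs_degree coeffs_nth)
    show "polyexp pi" "pi \<noteq> (\<lambda>_. 0)" by (fact Qpi(1), fact Qpi(2))
    show "\<forall>i<length (map Q [0..<Suc M]). polyexp (map Q [0..<Suc M] ! i)" using Qpi(3) by (simp del: upt_Suc)
    show "\<forall>i<length (map A [0..<Suc n]). polyexp (map A [0..<Suc n] ! i)" using Ape by (simp del: upt_Suc)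
    show "\<forall>f. f holomorphic_on UNIV \<longrightarrow> apply_op (map A [0..<Suc n]) f = Kbar n c f"
      by (auto simp del: upt_Suc simp: apply_op_def Kb fun_eq_iff intro!: sum.cong)
    show "\<forall>f. f holomorphic_on UNIV \<longrightarrow> (\<forall>x. pi x \<noteq> 0 \<longrightarrow>
        apply_const_op (coeffs P) f x = apply_op (map Q [0..<Suc M]) (\<lambda>y. Kbar n c f y / pi y) x)"
    proof (intro allI impI)
      fix f x assume f: "f holomorphic_on UNIV" and px: "pi x \<noteq> 0"
      have "apply_const_op (coeffs P) f x = (\<Sum>j<Suc M. Q j x * (deriv ^^ j) (\<lambda>y. K f y / pi y) x)"
        unfolding L0eq using Qpi(4) f px by blast
      also have "\<dots> = apply_op (map Q [0..<Suc M]) (\<lambda>y. Kbar n c f y / pi y) x"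
        unfolding apply_op_def KK by (intro sum.cong) (auto simp del: upt_Suc)
      finally show "apply_const_op (coeffs P) f x = apply_op (map Q [0..<Suc M]) (\<lambda>y. Kbar n c f y / pi y) x" .
    qed
  qed
qed

end
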